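(* Let $K=\mathbb{Q}[\sqrt{d}]$ with $d>1$ a square-free integer, let $\mathfrak{o}_K$ be its ring of integers, let $\epsilon>1$ be the fundamental unit of $\mathfrak{o}_K$, and let $C_2=\langle g\rangle$. Let $n$ be the order of $\epsilon$ modulo $2\mathfrak{o}_K$ (i.e. the least $n\ge 1$ with $\epsilon^n\in 1+2\mathfrak{o}_K$). Then $$\mathcal{U}_1(\mathfrak{o}_K[C_2])=\langle g\rangle\times\left\langle \tfrac{1+\epsilon^n}{2}+\tfrac{1-\epsilon^n}{2}g\right\rangle\cong C_2\times\mathbb{Z}.$$
   Context: The fundamental unit $\epsilon$ is the unique unit $\epsilon>1$ of $\mathfrak{o}_K$ with $\mathcal{U}(\mathfrak{o}_K)=\pm\langle\epsilon\rangle$. $\mathcal{U}_1(\mathfrak{o}_K[C_2])$ is the group of units of augmentation $1$ in the group ring $\mathfrak{o}_K[C_2]$. *)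

theory Defs
  imports Complex_Main "HOL-Computational_Algebra.Polynomial" "HOL-Computational_Algebra.Squarefree"
    "HOL-Algebra.Elementary_Groups"
begin

definition quad_field :: "int \<Rightarrow> real set" where
  "quad_field d = {of_rat a + of_rat b * sqrt (of_int d) | a b. True}"

definition ring_of_integers :: "int \<Rightarrow> real set" where
  "ring_of_integers d = {x \<in> quad_field d. \<exists>p :: int poly. lead_coeff p = 1 \<and>
                            poly (map_poly of_int p) x = 0}"

definition int_units :: "int \<Rightarrow> real set" where
  "int_units d = {x \<in> ring_of_integers d. \<exists>y \<in> ring_of_integers d. x * y = 1}"

definition fundamental_unit :: "int \<Rightarrow> real \<Rightarrow> bool" where
  "fundamental_unit d eps \<longleftrightarrow> eps \<in> ring_of_integers d \<and> eps > 1 \<and>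
     int_units d = {s * eps powi k | s k. s \<in> {1, -1}}"

text \<open>Group ring o_K[C_2]: the element a + b g is represented by the pair (a, b), g^2 = 1.\<close>
definition gr_mult :: "real \<times> real \<Rightarrow> real \<times> real \<Rightarrow> real \<times> real" where
  "gr_mult x y = (fst x * fst y + snd x * snd y, fst x * snd y + snd x * fst y)"

definition group_ring_monoid :: "int \<Rightarrow> (real \<times> real) monoid" where
  "group_ring_monoid d = \<lparr>carrier = ring_of_integers d \<times> ring_of_integers d,
                          mult = gr_mult, one = (1, 0)\<rparr>"

definition gen_g :: "real \<times> real" where
  "gen_g = (0, 1)"

definition U1 :: "int \<Rightarrow> (real \<times> real) monoid" where
  "U1 d = \<lparr>carrier = {x \<in> Units (group_ring_monoid d). fst x + snd x = 1},
           mult = gr_mult, one = (1, 0)\<rparr>"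

definition order_mod_2 :: "int \<Rightarrow> real \<Rightarrow> nat" where
  "order_mod_2 d eps = (LEAST n. n \<ge> 1 \<and> (eps ^ n - 1) / 2 \<in> ring_of_integers d)"

end

theory Submission
  imports Defs "Berlekamp_Zassenhaus.Factor_Bound"
begin

definition ww :: "int \<Rightarrow> real" where
  "ww d = (if d mod 4 = 1 then (1 + sqrt (of_int d)) / 2 else sqrt (of_int d))"

definition ZW :: "int \<Rightarrow> real set" where
  "ZW d = {of_int a + of_int b * ww d | a b. True}"

lemma sq_mod4: "(x::int)*x mod 4 = (if even x then 0 else 1)"
proof (cases "even x")
  case True then obtain k where "x = 2*k" by blast
  then show ?thesis by simp
next
  case False then obtain k where "x = 2*k+1" using oddE by blast
  define m where "m = k*k+k"
  hence "x*x = 4*m + 1" using \<open>x = 2*k+1\<close> by (simp add: algebra_simps)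
  moreover have "(4*m+1) mod 4 = (1::int)" by presburger
  ultimately show ?thesis using False by simp
qed

lemma sqfD: "squarefree (d::int) \<Longrightarrow> x*x dvd d \<Longrightarrow> x dvd 1"
  unfolding power2_eq_square[symmetric] by (rule squarefreeD)

lemma sqf_mod4: assumes "squarefree (d::int)" shows "d mod 4 \<noteq> 0"
proof
  assume "d mod 4 = 0"
  hence "(4::int) dvd d" by presburger
  hence "(2::int)*2 dvd d" by simp
  hence "is_unit (2::int)" by (rule sqfD[OF assms])
  thus False by simp
qed

lemma parity4:
  fixes A B d N :: int
  assumes "squarefree d" "A*A - d*(B*B) = 4*N"
  shows "(d mod 4 = 1 \<longrightarrow> even (A - B)) \<and> (d mod 4 \<noteq> 1 \<longrightarrow> even A \<and> even B)"
proof -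
  have AA: "A*A = d*(B*B) + 4*N" using assms(2) by linarith
  have "(A*A) mod 4 = (d*(B*B) + 4*N) mod 4" by (subst AA) (rule refl)
  also have "\<dots> = (d*(B*B)) mod 4" by simp
  also have "\<dots> = ((d mod 4) * ((B*B) mod 4)) mod 4" by (simp add: mod_mult_eq)
  finally have e: "(if even A then 0 else 1) = ((d mod 4) * (if even B then 0 else 1)) mod (4::int)"
    by (simp add: sq_mod4)
  have dm: "d mod 4 = 1 \<or> d mod 4 = 2 \<or> d mod 4 = 3" using sqf_mod4[OF assms(1)] by presburger
  show ?thesis using dm e by (cases "even A"; cases "even B"; elim disjE; simp)
qed

lemma int_of_sq_sqf:
  fixes c :: rat and M d :: int
  assumes "squarefree d" "c*c*of_int d = of_int M"
  shows "c \<in> \<int>"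
proof -
  obtain u v where q: "quotient_of c = (u,v)" by force
  have c: "c = of_int u / of_int v" using q quotient_of_div by blast
  have v: "v > 0" using q quotient_of_denom_pos by blast
  have cop: "algebraic_semidom_class.coprime u v" using q quotient_of_coprime by blast
  have "of_int u * of_int u * of_int d = (of_int M * of_int v * of_int v :: rat)"
    using assms(2) v unfolding c by (simp add: field_simps)
  hence "of_int (u*u*d) = (of_int (M*v*v) :: rat)" by simp
  hence eq: "u*u*d = M*v*v" using of_int_eq_iff by blast
  hence "(u*u)*d = (v*v)*M" by (simp add: algebra_simps)
  hence "v*v dvd (u*u)*d" unfolding dvd_def by blast
  moreover have "algebraic_semidom_class.coprime (v*v) (u*u)" using cop by (metis algebraic_semidom_class.coprime_commute coprime_mult_left_iff coprime_mult_right_iff)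
  ultimately have "v*v dvd d" by (simp add: coprime_dvd_mult_right_iff)
  hence "is_unit v" using assms(1) sqfD by blast
  hence "v = 1" using v by (simp add: zdvd1_eq)
  thus ?thesis using c by simp
qed


lemma monic_factor_int:
  fixes p :: "int poly" and g h :: "rat poly"
  assumes "lead_coeff p = 1" "of_int_poly p = g * h" "lead_coeff g = 1"
  shows "\<exists>g'. g = of_int_poly g'"
proof -
  obtain r rg where RG: "rat_to_normalized_int_poly g = (r, rg)" by force
  from rat_to_int_factor_explicit[OF assms(2) RG] obtain t where p: "p = rg * Polynomial.smult (content p) t" by blast
  have "lead_coeff p = lead_coeff rg * lead_coeff (Polynomial.smult (content p) t)"
    using p lead_coeff_mult by metis
  hence "lead_coeff rg dvd 1" using assms(1) by (metis dvdI)
  hence u: "lead_coeff rg = 1 \<or> lead_coeff rg = -1" using zdvd1_eq by auto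
  have g: "g = Polynomial.smult r (of_int_poly rg)" and r: "r > 0" using rat_to_normalized_int_poly[OF RG] by auto
  have "lead_coeff g = r * of_int (lead_coeff rg)" using g by simp
  with assms(3) have "r * of_int (lead_coeff rg) = 1" by simp
  with u r have "lead_coeff rg = 1" "r = 1" by (auto simp: mult_less_0_iff)
  thus ?thesis using g by auto
qed

lemma rat_root_int:
  fixes p :: "int poly" and q :: rat
  assumes "lead_coeff p = 1" "poly (of_int_poly p) q = 0"
  shows "q \<in> \<int>"
proof -
  have "[:-q,1:] dvd of_int_poly p" using assms(2) by (simp add: poly_eq_0_iff_dvd)
  then obtain h where "of_int_poly p = [:-q,1:] * h" by blast
  from monic_factor_int[OF assms(1) this] obtain g' where "[:-q,1:] = of_int_poly g'" by auto
  hence "Polynomial.coeff [:-q,1:] 0 = Polynomial.coeff (of_int_poly g') 0" by simp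
  hence "-q = of_int (Polynomial.coeff g' 0)" by simp
  hence "q = of_int (- Polynomial.coeff g' 0)" by simp
  thus ?thesis by (metis Ints_of_int)
qed

lemma poly_of_rat_hom: "poly (map_poly of_rat P) (of_rat x :: real) = of_rat (poly P x)"
  by (induction P) (auto simp: map_poly_pCons of_rat_add of_rat_mult)

lemma sqrt_irr:
  fixes d :: int assumes "d > 1" "squarefree d"
  shows "sqrt (of_int d) \<notin> \<rat>"
proof
  assume "sqrt (of_int d) \<in> \<rat>"
  then obtain q where q: "sqrt (of_int d) = of_rat q" by (metis Rats_cases)
  have "sqrt (of_int d) * sqrt (of_int d) = (of_int d :: real)" using assms(1) by simp
  hence "of_rat (q*q) = (of_int d :: real)" using q by (simp add: of_rat_mult)
  hence qq: "q * q = of_int d" by (metis of_rat_eq_iff of_rat_of_int_eq)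
  have "poly (of_int_poly [:-d,0,1:]) q = 0" using qq by simp
  moreover have "lead_coeff [:-d,0,1:] = (1::int)" by simp
  ultimately have "q \<in> \<int>" using rat_root_int by blast
  then obtain k where k: "q = of_int k" by (metis Ints_cases)
  hence "k * k = d" using qq by (metis of_int_eq_iff of_int_mult)
  hence "k * k dvd d" by simp
  hence "is_unit k" using assms(2) sqfD by blast
  hence "\<bar>k\<bar> = 1" by simp
  hence "k * k = 1" by (metis abs_mult_self_eq mult_1)
  with \<open>k*k = d\<close> assms(1) show False by simp
qed


lemma map_rat_add: "map_poly (of_rat::rat\<Rightarrow>real) (p + q) = map_poly of_rat p + map_poly of_rat q"
  by (simp add: hom_distribs)
lemma map_rat_mult: "map_poly (of_rat::rat\<Rightarrow>real) (p * q) = map_poly of_rat p * map_poly of_rat q"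
proof -
  interpret h: map_poly_comm_ring_hom "of_rat::rat\<Rightarrow>real" by unfold_locales
  show ?thesis by (rule h.hom_mult)
qed
lemma map_rat_lin: "map_poly (of_rat::rat\<Rightarrow>real) [:c0,c1:] = [:of_rat c0, of_rat c1:]"
  by (rule poly_eqI) (simp add: coeff_map_poly coeff_pCons split: nat.split)

lemma lin_aux: "(A::real) = 2*k + B \<Longrightarrow> A/2 + B/2*s = k + B*((1+s)/2)"
  by (simp add: algebra_simps add_divide_distrib)

lemma OK_sub_ZW:
  assumes d: "d > 1" "squarefree d" and x: "x \<in> ring_of_integers d"
  shows "x \<in> ZW d"
proof -
  let ?s = "sqrt (real_of_int d)"
  from x obtain a b p where xab: "x = of_rat a + of_rat b * ?s" and lp: "lead_coeff p = 1"
     and px: "poly (map_poly of_int p) x = 0"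
    unfolding ring_of_integers_def quad_field_def by blast
  have irr: "v = 0" if h: "of_rat u + of_rat v * ?s = 0" for u v
  proof (rule ccontr)
    assume v: "v \<noteq> 0"
    hence "?s = of_rat (- u / v)" using h by (simp add: of_rat_divide of_rat_minus field_simps)
    hence "?s \<in> \<rat>" by simp
    thus False using sqrt_irr[OF d] by simp
  qed
  have ss: "?s * ?s = of_int d" using d by simp
  define P where "P = (of_int_poly p :: rat poly)"
  have mapP: "map_poly of_rat P = (map_poly of_int p :: real poly)"
    unfolding P_def by (simp add: map_poly_map_poly o_def)
  have rootP: "poly (map_poly of_rat P) x = 0" using mapP px by simp
  obtain A B N :: int where AB: "2*a = of_int A" "2*b = of_int B" and ABN: "A*A - d*(B*B) = 4*N"
  proof (cases "b = 0")
    case True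
    hence "poly (map_poly of_rat P) (of_rat a) = 0" using rootP xab by simp
    hence "poly P a = 0" using poly_of_rat_hom by simp
    hence "a \<in> \<int>" using rat_root_int lp unfolding P_def by blast
    then obtain k where "a = of_int k" by (auto elim: Ints_cases)
    then show ?thesis using that[of "2*k" 0 "k*k"] True by simp
  next
    case False
    define m where "m = [:a*a - of_int d*b*b, -2*a, 1:]"
    have m0: "m \<noteq> 0" unfolding m_def by simp
    define r where "r = P mod m"
    have Pdec: "P = m * (P div m) + r" unfolding r_def by (simp add: mult.commute)
    have degm: "degree m = 2" by (simp add: m_def)
    have dr: "r = 0 \<or> degree r < 2" using degree_mod_less[OF m0] degm unfolding r_def by simp
    have rform: "r = [:Polynomial.coeff r 0, Polynomial.coeff r 1:]"
    proof (rule poly_eqI)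
      fix n show "Polynomial.coeff r n = Polynomial.coeff [:Polynomial.coeff r 0, Polynomial.coeff r 1:] n"
      proof (cases "n \<ge> 2")
        case True thus ?thesis using dr by (cases n; cases "n - 1") (auto simp: coeff_eq_0)
      next
        case False hence "n = 0 \<or> n = 1" by auto
        thus ?thesis by auto
      qed
    qed
    have "poly (map_poly of_rat m) x = (of_rat b)^2 * (?s*?s - of_int d)"
      by (simp add: m_def xab of_rat_mult of_rat_diff of_rat_add of_rat_minus algebra_simps power2_eq_square)
    hence mx: "poly (map_poly of_rat m) x = 0" using ss by simp
    have "poly (map_poly of_rat r) x = 0"
      using rootP mx arg_cong[OF Pdec, of "\<lambda>Q. poly (map_poly of_rat Q) x"]
      by (simp add: map_rat_add map_rat_mult)
    hence "of_rat (Polynomial.coeff r 0) + x * of_rat (Polynomial.coeff r 1) = 0"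
      by (subst (asm) rform) (simp add: map_rat_lin)
    hence "of_rat (Polynomial.coeff r 0 + Polynomial.coeff r 1 * a) + of_rat (Polynomial.coeff r 1 * b) * ?s = 0"
      by (simp add: xab of_rat_add of_rat_mult algebra_simps)
    hence "Polynomial.coeff r 1 * b = 0" by (rule irr)
    hence r1: "Polynomial.coeff r 1 = 0" using False by simp
    with \<open>of_rat (Polynomial.coeff r 0) + x * of_rat (Polynomial.coeff r 1) = 0\<close>
    have "Polynomial.coeff r 0 = 0" by simp
    with r1 have "r = 0" by (subst rform) simp
    hence "of_int_poly p = m * (P div m)" using Pdec unfolding P_def by simp
    moreover have "lead_coeff m = 1" by (simp add: m_def)
    ultimately obtain g' where g': "m = of_int_poly g'" using monic_factor_int[OF lp] by blast
    have c1: "-2*a = of_int (Polynomial.coeff g' 1)"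
      using arg_cong[OF g', of "\<lambda>Q. Polynomial.coeff Q 1"] by (simp add: m_def)
    have c0: "a*a - of_int d*b*b = of_int (Polynomial.coeff g' 0)"
      using arg_cong[OF g', of "\<lambda>Q. Polynomial.coeff Q 0"] by (simp add: m_def)
    define A where "A = - Polynomial.coeff g' 1"
    define N where "N = Polynomial.coeff g' 0"
    have A: "2*a = of_int A" using c1 unfolding A_def by simp
    have "of_int (A*A - 4*N) = (of_int A)*(of_int A) - 4*(of_int N :: rat)" by simp
    also have "\<dots> = (2*a)*(2*a) - 4*(a*a - of_int d*b*b)" using A c0 unfolding N_def by simp
    also have "\<dots> = (2*b)*(2*b)*of_int d" by (simp add: algebra_simps)
    finally have "(2*b)*(2*b)*of_int d = of_int (A*A-4*N)" by simp
    hence "2*b \<in> \<int>" by (rule int_of_sq_sqf[OF d(2)])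
    then obtain B where B: "2*b = of_int B" by (auto elim: Ints_cases)
    have "of_int (A*A - d*(B*B)) = (of_int A)*(of_int A) - of_int d*((of_int B)*(of_int B) :: rat)" by simp
    also have "\<dots> = 4*(a*a - of_int d*b*b)" unfolding A[symmetric] B[symmetric] by (simp add: algebra_simps)
    also have "\<dots> = of_int (4*N)" using c0 unfolding N_def by simp
    finally have "A*A - d*(B*B) = 4*N" by (simp only: of_int_eq_iff)
    thus ?thesis using that A B by blast
  qed
  have pa: "of_rat a = (of_int A / 2 :: real)"
    using arg_cong[OF AB(1), of "of_rat :: rat \<Rightarrow> real"] by (simp add: of_rat_mult)
  have pb: "of_rat b = (of_int B / 2 :: real)"
    using arg_cong[OF AB(2), of "of_rat :: rat \<Rightarrow> real"] by (simp add: of_rat_mult)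
  have xx: "x = of_int A / 2 + of_int B / 2 * ?s" using xab pa pb by simp
  have par: "(d mod 4 = 1 \<longrightarrow> even (A - B)) \<and> (d mod 4 \<noteq> 1 \<longrightarrow> even A \<and> even B)"
    by (rule parity4[OF d(2) ABN])
  show ?thesis
  proof (cases "d mod 4 = 1")
    case True
    hence "even (A - B)" using par by simp
    then obtain k where k: "A - B = 2*k" by (rule evenE)
    hence "A = 2*k + B" by simp
    hence "of_int A = 2 * of_int k + (of_int B :: real)" by simp
    hence "x = of_int k + of_int B * ((1 + ?s)/2)" unfolding xx by (rule lin_aux)
    hence "x = of_int k + of_int B * ww d" using True unfolding ww_def by simp
    thus ?thesis unfolding ZW_def by blast
  next
    case False
    hence eA: "even A" and eB: "even B" using par by simp_all
    from eA obtain k where k: "A = 2*k" by (rule evenE)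
    from eB obtain l where l: "B = 2*l" by (rule evenE)
    have "x = of_int k + of_int l * ?s" unfolding xx k l by simp
    hence "x = of_int k + of_int l * ww d" using False unfolding ww_def by simp
    thus ?thesis unfolding ZW_def by blast
  qed
qed


definition cc1 :: "int \<Rightarrow> int" where "cc1 d = (if d mod 4 = 1 then 1 else 0)"
definition cc0 :: "int \<Rightarrow> int" where "cc0 d = (if d mod 4 = 1 then (d - 1) div 4 else d)"

lemma ww_sq: assumes "d > 1" shows "ww d * ww d = of_int (cc1 d) * ww d + of_int (cc0 d)"
proof -
  let ?s = "sqrt (real_of_int d)"
  have ss: "?s * ?s = of_int d" using assms by simp
  show ?thesis
  proof (cases "d mod 4 = 1")
    case True
    have "d = 4 * ((d - 1) div 4) + 1" using True by presburger
    hence "real_of_int d = 4 * of_int ((d - 1) div 4) + 1" by (metis of_int_add of_int_mult of_int_numeral of_int_1)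
    hence "?s * ?s = 4 * of_int ((d - 1) div 4) + 1" using ss by simp
    hence "((1 + ?s)/2) * ((1 + ?s)/2) = (1 + ?s)/2 + of_int ((d - 1) div 4)"
      by (simp add: algebra_simps add_divide_distrib power2_eq_square)
    thus ?thesis using True unfolding ww_def cc1_def cc0_def by simp
  next
    case False
    thus ?thesis using ss unfolding ww_def cc1_def cc0_def by simp
  qed
qed

lemma ww_qf: "\<exists>q1 q2. ww d = of_rat q1 + of_rat q2 * sqrt (of_int d)"
proof (cases "d mod 4 = 1")
  case True
  have "ww d = of_rat (1/2) + of_rat (1/2) * sqrt (of_int d)"
    using True unfolding ww_def by (simp add: of_rat_divide add_divide_distrib)
  thus ?thesis by blast
next
  case False
  have "ww d = of_rat 0 + of_rat 1 * sqrt (of_int d)" using False unfolding ww_def by simp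
  thus ?thesis by blast
qed

lemma ZW_I: "of_int a + of_int b * ww d \<in> ZW d" unfolding ZW_def by blast

lemma ZW_E: assumes "x \<in> ZW d" obtains a b where "x = of_int a + of_int b * ww d"
  using assms unfolding ZW_def by blast

lemma ZW_int: "of_int k \<in> ZW d"
  using ZW_I[of k 0 d] by simp

lemma ZW_0: "0 \<in> ZW d" using ZW_int[of 0 d] by simp
lemma ZW_1: "1 \<in> ZW d" using ZW_int[of 1 d] by simp

lemma ZW_add: assumes "x \<in> ZW d" "y \<in> ZW d" shows "x + y \<in> ZW d"
proof -
  obtain a b where x: "x = of_int a + of_int b * ww d" using assms(1) by (rule ZW_E)
  obtain c e where y: "y = of_int c + of_int e * ww d" using assms(2) by (rule ZW_E)
  have "x + y = of_int (a + c) + of_int (b + e) * ww d" unfolding x y by (simp add: algebra_simps)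
  thus ?thesis by (simp only: ZW_I)
qed

lemma ZW_uminus: assumes "x \<in> ZW d" shows "- x \<in> ZW d"
proof -
  obtain a b where x: "x = of_int a + of_int b * ww d" using assms(1) by (rule ZW_E)
  have "- x = of_int (- a) + of_int (- b) * ww d" unfolding x by simp
  thus ?thesis by (simp only: ZW_I)
qed

lemma ZW_diff: assumes "x \<in> ZW d" "y \<in> ZW d" shows "x - y \<in> ZW d"
  using ZW_add[OF assms(1) ZW_uminus[OF assms(2)]] by simp

lemma ZW_mult: assumes "d > 1" "x \<in> ZW d" "y \<in> ZW d" shows "x * y \<in> ZW d"
proof -
  obtain a b where x: "x = of_int a + of_int b * ww d" using assms(2) by (rule ZW_E)
  obtain c e where y: "y = of_int c + of_int e * ww d" using assms(3) by (rule ZW_E)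
  have w: "ww d * ww d = of_int (cc1 d) * ww d + of_int (cc0 d)" by (rule ww_sq[OF assms(1)])
  have "x * y = of_int a * of_int c + (of_int a * of_int e + of_int b * of_int c) * ww d
               + of_int b * of_int e * (ww d * ww d)" unfolding x y by (simp add: algebra_simps)
  also have "\<dots> = of_int (a*c + b*e*cc0 d) + of_int (a*e + b*c + b*e*cc1 d) * ww d"
    unfolding w by (simp add: algebra_simps)
  finally show ?thesis by (simp only: ZW_I)
qed

lemma map_int_quad: "map_poly (of_int::int\<Rightarrow>real) [:c0, c1, c2:] = [:of_int c0, of_int c1, of_int c2:]"
  by (rule poly_eqI) (simp add: coeff_map_poly coeff_pCons split: nat.split)

lemma ZW_sub_OK: assumes "d > 1" "x \<in> ZW d" shows "x \<in> ring_of_integers d"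
proof -
  obtain a b where x: "x = of_int a + of_int b * ww d" using assms(2) by (rule ZW_E)
  obtain q1 q2 where w: "ww d = of_rat q1 + of_rat q2 * sqrt (of_int d)" using ww_qf by blast
  have "x = of_rat (of_int a + of_int b * q1) + of_rat (of_int b * q2) * sqrt (of_int d)"
    unfolding x w by (simp add: of_rat_add of_rat_mult algebra_simps)
  hence qf: "x \<in> quad_field d" unfolding quad_field_def by blast
  define T where "T = 2*a + b * cc1 d"
  define N where "N = a*a + a*b*cc1 d - b*b*cc0 d"
  have wsq: "ww d * ww d = of_int (cc1 d) * ww d + of_int (cc0 d)" by (rule ww_sq[OF assms(1)])
  have "poly (map_poly of_int [:N, -T, 1:]) x = of_int N + x * (- of_int T + x)"
    by (simp add: map_int_quad)
  also have "\<dots> = 0" unfolding x T_def N_def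
  proof -
    let ?w = "ww d"
    have "of_int (a * a + a * b * cc1 d - b * b * cc0 d) +
      (of_int a + of_int b * ?w) * (- of_int (2 * a + b * cc1 d) + (of_int a + of_int b * ?w))
      = of_int b * of_int b * (?w * ?w - (of_int (cc1 d) * ?w + of_int (cc0 d)))"
      by (simp add: algebra_simps)
    thus "of_int (a * a + a * b * cc1 d - b * b * cc0 d) +
      (of_int a + of_int b * ?w) * (- of_int (2 * a + b * cc1 d) + (of_int a + of_int b * ?w)) = (0::real)"
      using wsq by simp
  qed
  finally have "poly (map_poly of_int [:N, -T, 1:]) x = 0" .
  moreover have "lead_coeff [:N, -T, 1:] = (1::int)" by simp
  ultimately show ?thesis using qf unfolding ring_of_integers_def by blast
qed

lemma OK_eq: assumes "d > 1" "squarefree d" shows "ring_of_integers d = ZW d"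
  using OK_sub_ZW[OF assms] ZW_sub_OK[OF assms(1)] by blast


definition EE :: "real \<Rightarrow> real \<times> real" where "EE v = ((1 + v) / 2, (1 - v) / 2)"

lemma gr_mult_EE: "gr_mult (EE v) (EE w) = EE (v * w)"
  unfolding gr_mult_def EE_def by (simp add: field_simps)

lemma EE_inj: "EE v = EE w \<Longrightarrow> v = w"
  unfolding EE_def by simp

lemma EE_1: "EE 1 = (1, 0)" unfolding EE_def by simp
lemma gen_g_EE: "gen_g = EE (-1)" unfolding EE_def gen_g_def by simp

locale qs =
  fixes d :: int and eps :: real
  assumes d1: "d > 1" and sqf: "squarefree d" and fu: "fundamental_unit d eps"
begin

lemma OKZ: "ring_of_integers d = ZW d" using OK_eq d1 sqf by blast

lemma OK_add: "x \<in> ring_of_integers d \<Longrightarrow> y \<in> ring_of_integers d \<Longrightarrow> x + y \<in> ring_of_integers d"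
  unfolding OKZ by (rule ZW_add)
lemma OK_uminus: "x \<in> ring_of_integers d \<Longrightarrow> - x \<in> ring_of_integers d"
  unfolding OKZ by (rule ZW_uminus)
lemma OK_diff: "x \<in> ring_of_integers d \<Longrightarrow> y \<in> ring_of_integers d \<Longrightarrow> x - y \<in> ring_of_integers d"
  unfolding OKZ by (rule ZW_diff)
lemma OK_mult: "x \<in> ring_of_integers d \<Longrightarrow> y \<in> ring_of_integers d \<Longrightarrow> x * y \<in> ring_of_integers d"
  unfolding OKZ using d1 by (rule ZW_mult)
lemma OK_int: "of_int k \<in> ring_of_integers d"
  unfolding OKZ by (rule ZW_int)
lemma OK_0: "0 \<in> ring_of_integers d" unfolding OKZ by (rule ZW_0)
lemma OK_1: "1 \<in> ring_of_integers d" unfolding OKZ by (rule ZW_1)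
lemma OK_pow: "x \<in> ring_of_integers d \<Longrightarrow> x ^ m \<in> ring_of_integers d"
  by (induction m) (simp_all add: OK_1 OK_mult)

lemma eps_OK: "eps \<in> ring_of_integers d" using fu unfolding fundamental_unit_def by blast
lemma eps_gt1: "eps > 1" using fu unfolding fundamental_unit_def by blast
lemma eps_nz: "eps \<noteq> 0" using eps_gt1 by simp
lemma units_eq: "int_units d = {s * eps powi k | s k. s \<in> {1, -1}}"
  using fu unfolding fundamental_unit_def by blast

lemma unitI: "s \<in> {1, -1} \<Longrightarrow> s * eps powi k \<in> int_units d"
  unfolding units_eq by blast

lemma unitE:
  assumes "v \<in> int_units d"
  obtains s k where "s \<in> {1, -1}" "v = s * eps powi k"
  using assms unfolding units_eq by blast

lemma unit_OK: assumes "v \<in> int_units d" shows "v \<in> ring_of_integers d" "v \<noteq> 0" "inverse v \<in> ring_of_integers d"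
proof -
  from assms obtain y where v: "v \<in> ring_of_integers d" and y: "y \<in> ring_of_integers d" "v * y = 1"
    unfolding int_units_def by blast
  show "v \<in> ring_of_integers d" by (rule v)
  show "v \<noteq> 0" using y by auto
  have "inverse v = y" using y by (simp add: inverse_unique)
  thus "inverse v \<in> ring_of_integers d" using y by simp
qed

lemma eps_powi_OK: "eps powi k \<in> ring_of_integers d"
  using unit_OK(1)[OF unitI[of 1 k]] by simp

lemma unitI2: assumes "v \<in> ring_of_integers d" "w \<in> ring_of_integers d" "v * w = 1"
  shows "v \<in> int_units d"
  using assms unfolding int_units_def by blast

definition VV where "VV = {v \<in> int_units d. (1 + v) / 2 \<in> ring_of_integers d}"

lemma VV_unit: "v \<in> VV \<Longrightarrow> v \<in> int_units d" unfolding VV_def by blast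
lemma VV_half: "v \<in> VV \<Longrightarrow> (1 + v) / 2 \<in> ring_of_integers d" unfolding VV_def by blast
lemma VV_half2: assumes "v \<in> VV" shows "(1 - v) / 2 \<in> ring_of_integers d"
proof -
  have eq: "(1 - v) / 2 = 1 - (1 + v) / 2" by (simp add: field_simps)
  show ?thesis unfolding eq by (rule OK_diff[OF OK_1 VV_half[OF assms]])
qed
lemma VV_nz: "v \<in> VV \<Longrightarrow> v \<noteq> 0" using unit_OK(2) VV_unit by blast

lemma VV_mult: assumes "v \<in> VV" "w \<in> VV" shows "v * w \<in> VV"
proof -
  have vu: "v \<in> ring_of_integers d" "inverse v \<in> ring_of_integers d" "v \<noteq> 0"
    using unit_OK VV_unit[OF assms(1)] by blast+
  have wu: "w \<in> ring_of_integers d" "inverse w \<in> ring_of_integers d" "w \<noteq> 0"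
    using unit_OK VV_unit[OF assms(2)] by blast+
  have "(v * w) * (inverse v * inverse w) = 1" using vu(3) wu(3) by (simp add: field_simps)
  hence u: "v * w \<in> int_units d"
    using unitI2 OK_mult[OF vu(1) wu(1)] OK_mult[OF vu(2) wu(2)] by blast
  have "(1 + v * w) / 2 = ((1 + v)/2) * ((1 + w)/2) + ((1 - v)/2) * ((1 - w)/2)"
    by (simp add: field_simps)
  also have "\<dots> \<in> ring_of_integers d"
    using OK_add OK_mult VV_half VV_half2 assms by metis
  finally show ?thesis using u unfolding VV_def by blast
qed

lemma VV_inv: assumes "v \<in> VV" shows "inverse v \<in> VV"
proof -
  have vu: "v \<in> ring_of_integers d" "inverse v \<in> ring_of_integers d" "v \<noteq> 0"
    using unit_OK VV_unit[OF assms(1)] by blast+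
  have u: "inverse v \<in> int_units d" using unitI2[OF vu(2) vu(1)] vu(3) by simp
  have "(1 + inverse v) / 2 = ((1 + v) / 2) * inverse v" using vu(3) by (simp add: field_simps)
  also have "\<dots> \<in> ring_of_integers d" using OK_mult[OF VV_half[OF assms] vu(2)] .
  finally show ?thesis using u unfolding VV_def by blast
qed

lemma VV_1: "1 \<in> VV"
  using unitI[of 1 0] OK_1 unfolding VV_def by simp
lemma VV_m1: "-1 \<in> VV"
  using unitI[of "-1" 0] OK_0 unfolding VV_def by simp

lemma VV_pow: "v \<in> VV \<Longrightarrow> v ^ m \<in> VV"
  by (induction m) (simp_all add: VV_1 VV_mult)

lemma carrier_U1: "carrier (U1 d) = EE ` VV"
proof
  show "carrier (U1 d) \<subseteq> EE ` VV"
  proof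
    fix x assume x: "x \<in> carrier (U1 d)"
    obtain a b where ab: "x = (a, b)" by force
    from x have s1: "a + b = 1" and xu: "x \<in> Units (group_ring_monoid d)"
      unfolding U1_def ab by auto
    from xu obtain y where y: "y \<in> ring_of_integers d \<times> ring_of_integers d"
      and xy: "gr_mult x y = (1, 0)" and xc: "x \<in> ring_of_integers d \<times> ring_of_integers d"
      unfolding Units_def group_ring_monoid_def by auto
    obtain c e where ce: "y = (c, e)" by force
    have a: "a \<in> ring_of_integers d" and b: "b \<in> ring_of_integers d" using xc ab by auto
    have c: "c \<in> ring_of_integers d" and e: "e \<in> ring_of_integers d" using y ce by auto
    have m: "a*c + b*e = 1" "a*e + b*c = 0" using xy unfolding ab ce gr_mult_def by auto
    have "(a - b) * (c - e) = 1" using m by (simp add: algebra_simps)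
    hence "a - b \<in> int_units d" using unitI2 OK_diff[OF a b] OK_diff[OF c e] by blast
    moreover have h: "(1 + (a - b)) / 2 = a" using s1 by (simp add: field_simps)
    have "(1 + (a - b)) / 2 \<in> ring_of_integers d" by (subst h) (rule a)
    ultimately have "a - b \<in> VV" unfolding VV_def by blast
    moreover have "x = EE (a - b)" unfolding ab EE_def using s1 by (simp add: field_simps)
    ultimately show "x \<in> EE ` VV" by blast
  qed
next
  show "EE ` VV \<subseteq> carrier (U1 d)"
  proof
    fix x assume "x \<in> EE ` VV"
    then obtain v where v: "v \<in> VV" and x: "x = EE v" by blast
    have iv: "inverse v \<in> VV" by (rule VV_inv[OF v])
    have nz: "v \<noteq> 0" by (rule VV_nz[OF v])
    have c1: "EE v \<in> ring_of_integers d \<times> ring_of_integers d"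
      unfolding EE_def using VV_half[OF v] VV_half2[OF v] by simp
    have c2: "EE (inverse v) \<in> ring_of_integers d \<times> ring_of_integers d"
      unfolding EE_def using VV_half[OF iv] VV_half2[OF iv] by simp
    have "gr_mult (EE (inverse v)) (EE v) = (1, 0)" "gr_mult (EE v) (EE (inverse v)) = (1, 0)"
      unfolding gr_mult_EE using nz by (simp_all add: EE_1)
    hence "EE v \<in> Units (group_ring_monoid d)" unfolding Units_def
    proof (intro CollectI conjI bexI)
      show "EE v \<in> carrier (group_ring_monoid d)" using c1 by (simp add: group_ring_monoid_def)
      show "EE (inverse v) \<in> carrier (group_ring_monoid d)" using c2 by (simp add: group_ring_monoid_def)
    qed (simp_all add: group_ring_monoid_def)
    moreover have "fst (EE v) + snd (EE v) = 1" unfolding EE_def by (simp add: field_simps)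
    ultimately show "x \<in> carrier (U1 d)" unfolding U1_def x by simp
  qed
qed

lemma mult_U1: "x \<otimes>\<^bsub>U1 d\<^esub> y = gr_mult x y" unfolding U1_def by simp
lemma one_U1: "\<one>\<^bsub>U1 d\<^esub> = EE 1" unfolding U1_def EE_1 by simp

lemma comm_group_U1: "comm_group (U1 d)"
proof (rule comm_groupI)
  fix x y assume "x \<in> carrier (U1 d)" "y \<in> carrier (U1 d)"
  then obtain v w where vw: "v \<in> VV" "w \<in> VV" and xy: "x = EE v" "y = EE w" unfolding carrier_U1 by blast
  have "x \<otimes>\<^bsub>U1 d\<^esub> y = EE (v * w)" unfolding xy mult_U1 gr_mult_EE ..
  thus "x \<otimes>\<^bsub>U1 d\<^esub> y \<in> carrier (U1 d)" unfolding carrier_U1 using imageI[OF VV_mult[OF vw]] by simp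
next
  show "\<one>\<^bsub>U1 d\<^esub> \<in> carrier (U1 d)" unfolding carrier_U1 one_U1 using imageI[OF VV_1] .
next
  fix x y z assume "x \<in> carrier (U1 d)" "y \<in> carrier (U1 d)" "z \<in> carrier (U1 d)"
  show "x \<otimes>\<^bsub>U1 d\<^esub> y \<otimes>\<^bsub>U1 d\<^esub> z = x \<otimes>\<^bsub>U1 d\<^esub> (y \<otimes>\<^bsub>U1 d\<^esub> z)"
    unfolding mult_U1 gr_mult_def by (simp add: algebra_simps)
next
  fix x y assume "x \<in> carrier (U1 d)" "y \<in> carrier (U1 d)"
  show "x \<otimes>\<^bsub>U1 d\<^esub> y = y \<otimes>\<^bsub>U1 d\<^esub> x"
    unfolding mult_U1 gr_mult_def by (simp add: algebra_simps)
next
  fix x assume "x \<in> carrier (U1 d)"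
  show "\<one>\<^bsub>U1 d\<^esub> \<otimes>\<^bsub>U1 d\<^esub> x = x"
    unfolding mult_U1 one_U1 EE_1 gr_mult_def by simp
next
  fix x assume "x \<in> carrier (U1 d)"
  then obtain v where v: "v \<in> VV" "x = EE v" unfolding carrier_U1 by blast
  have "EE (inverse v) \<in> carrier (U1 d)" unfolding carrier_U1 using imageI[OF VV_inv[OF v(1)]] .
  moreover have "EE (inverse v) \<otimes>\<^bsub>U1 d\<^esub> x = \<one>\<^bsub>U1 d\<^esub>"
    unfolding v(2) mult_U1 one_U1 gr_mult_EE using VV_nz[OF v(1)] by simp
  ultimately show "\<exists>y\<in>carrier (U1 d). y \<otimes>\<^bsub>U1 d\<^esub> x = \<one>\<^bsub>U1 d\<^esub>" by blast
qed

lemma group_U1: "group (U1 d)" using comm_group_U1 by (simp add: comm_group_def)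

lemma EE_carrier: "v \<in> VV \<Longrightarrow> EE v \<in> carrier (U1 d)" unfolding carrier_U1 by (rule imageI)

lemma inv_U1: assumes "v \<in> VV" shows "inv\<^bsub>U1 d\<^esub> (EE v) = EE (inverse v)"
proof -
  interpret group "U1 d" by (rule group_U1)
  show ?thesis
    by (rule inv_equality) (simp_all add: mult_U1 one_U1 gr_mult_EE VV_nz[OF assms] EE_carrier assms VV_inv)
qed

lemma pow_nat_U1: assumes "v \<in> VV" shows "EE v [^]\<^bsub>U1 d\<^esub> (m::nat) = EE (v ^ m)"
  by (induction m) (simp_all add: one_U1 mult_U1 gr_mult_EE mult.commute)

lemma pow_int_U1: assumes "v \<in> VV" shows "EE v [^]\<^bsub>U1 d\<^esub> (k::int) = EE (v powi k)"
proof (cases "k < 0")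
  case True
  have "EE v [^]\<^bsub>U1 d\<^esub> k = inv\<^bsub>U1 d\<^esub> (EE (v ^ nat (-k)))"
    using True by (subst int_pow_def2) (simp add: pow_nat_U1[OF assms])
  also have "\<dots> = EE (inverse (v ^ nat (-k)))" by (rule inv_U1[OF VV_pow[OF assms]])
  also have "inverse (v ^ nat (-k)) = v powi k" using True by (simp add: power_int_def power_inverse)
  finally show ?thesis .
next
  case False
  thus ?thesis by (subst int_pow_def2) (simp add: pow_nat_U1[OF assms] power_int_def)
qed

end


lemma modeq_even: "(x::int) mod 2 = y mod 2 \<Longrightarrow> even (x - y)" by presburger

context qs
begin

definition TT where "TT m \<longleftrightarrow> (eps powi m - 1) / 2 \<in> ring_of_integers d"

lemma TT_0: "TT 0" unfolding TT_def by (simp add: OK_0)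

lemma TT_add: assumes "TT a" "TT b" shows "TT (a + b)"
proof -
  let ?x = "eps powi a" and ?y = "eps powi b"
  have "eps powi (a + b) = ?x * ?y" using eps_nz by (simp add: power_int_add)
  hence "(eps powi (a + b) - 1) / 2 = ?x * ((?y - 1) / 2) + (?x - 1) / 2"
    by (simp add: field_simps)
  also have "\<dots> \<in> ring_of_integers d"
    using assms unfolding TT_def by (intro OK_add OK_mult eps_powi_OK)
  finally show ?thesis unfolding TT_def .
qed

lemma TT_neg: assumes "TT a" shows "TT (- a)"
proof -
  let ?x = "eps powi a" and ?z = "eps powi (- a)"
  have xz: "?z * ?x = 1" using eps_nz by (simp add: power_int_minus)
  hence "(?z - 1) / 2 = - (?z * ((?x - 1) / 2))" by (simp add: field_simps)
  also have "\<dots> \<in> ring_of_integers d"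
    using assms unfolding TT_def by (intro OK_uminus OK_mult eps_powi_OK)
  finally show ?thesis unfolding TT_def .
qed

lemma TT_mult_nat: assumes "TT a" shows "TT (a * int j)"
proof (induction j)
  case 0 show ?case by (simp add: TT_0)
next
  case (Suc j)
  have "a * int (Suc j) = a * int j + a" by (simp add: algebra_simps)
  thus ?case using TT_add[OF Suc assms] by simp
qed

lemma TT_mult: assumes "TT a" shows "TT (a * k)"
proof (cases "k \<ge> 0")
  case True
  hence "k = int (nat k)" by simp
  thus ?thesis using TT_mult_nat[OF assms, of "nat k"] by simp
next
  case False
  hence "a * k = - (a * int (nat (- k)))" by simp
  thus ?thesis using TT_neg[OF TT_mult_nat[OF assms, of "nat (-k)"]] by simp
qed

lemma ex_TT: "\<exists>m::nat. m \<ge> 1 \<and> (eps ^ m - 1) / 2 \<in> ring_of_integers d"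
proof -
  have h: "\<forall>j::nat. \<exists>p::int\<times>int. eps ^ j = of_int (fst p) + of_int (snd p) * ww d"
  proof
    fix j :: nat
    have "eps ^ j \<in> ZW d" using OK_pow[OF eps_OK] unfolding OKZ .
    then obtain a b where "eps ^ j = of_int a + of_int b * ww d" by (rule ZW_E)
    thus "\<exists>p::int\<times>int. eps ^ j = of_int (fst p) + of_int (snd p) * ww d" by (intro exI[of _ "(a,b)"]) simp
  qed
  obtain f where f: "\<And>j. eps ^ j = of_int (fst (f j)) + of_int (snd (f j)) * ww d"
    using choice[OF h] by auto
  define g where "g j = (fst (f j) mod 2, snd (f j) mod 2)" for j :: nat
  have sub: "g ` {0..<5} \<subseteq> {0..<2::int} \<times> {0..<2::int}" unfolding g_def by auto
  have c4: "card ({0..<2::int} \<times> {0..<2::int}) = 4" by (simp add: card_cartesian_product)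
  have ni: "\<not> inj_on g {0..<5}"
  proof
    assume "inj_on g {0..<5}"
    hence "card (g ` {0..<5}) = 5" by (simp add: card_image)
    moreover have "card (g ` {0..<5}) \<le> 4" using card_mono[OF _ sub] c4 by simp
    ultimately show False by simp
  qed
  then obtain i j where ij0: "i \<noteq> j" "g i = g j" unfolding inj_on_def by auto
  have "\<exists>i j. i < j \<and> g i = g j"
  proof (cases "i < j")
    case True thus ?thesis using ij0 by blast
  next
    case False hence "j < i" using ij0 by simp
    thus ?thesis using ij0 by metis
  qed
  then obtain i j where ij: "i < j" "g i = g j" by blast
  have "even (fst (f j) - fst (f i))" using ij(2) unfolding g_def by (intro modeq_even) simp
  then obtain al where al: "fst (f j) - fst (f i) = 2 * al" by (rule evenE)
  have "even (snd (f j) - snd (f i))" using ij(2) unfolding g_def by (intro modeq_even) simp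
  then obtain be where be: "snd (f j) - snd (f i) = 2 * be" by (rule evenE)
  have "eps ^ j - eps ^ i = of_int (fst (f j) - fst (f i)) + of_int (snd (f j) - snd (f i)) * ww d"
    using f[of j] f[of i] by (simp add: algebra_simps)
  also have "\<dots> = 2 * (of_int al + of_int be * ww d)" unfolding al be by (simp add: algebra_simps)
  finally have "(eps ^ j - eps ^ i) / 2 = of_int al + of_int be * ww d" by simp
  hence D: "(eps ^ j - eps ^ i) / 2 \<in> ring_of_integers d" unfolding OKZ by (simp only: ZW_I)
  have ej: "eps ^ j = eps ^ i * eps ^ (j - i)" using ij(1) by (simp add: power_add[symmetric])
  have inv: "eps powi (- int i) * eps ^ i = 1" using eps_nz by (simp add: power_int_minus)
  have "(eps ^ (j - i) - 1) / 2 = eps powi (- int i) * ((eps ^ j - eps ^ i) / 2)"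
    unfolding ej using inv by (simp add: field_simps)
  also have "\<dots> \<in> ring_of_integers d" by (intro OK_mult eps_powi_OK D)
  finally show ?thesis using ij(1) by (intro exI[of _ "j - i"]) simp
qed

definition nn where "nn = order_mod_2 d eps"

lemma nn_prop: "nn \<ge> 1" "(eps ^ nn - 1) / 2 \<in> ring_of_integers d"
  using LeastI_ex[OF ex_TT] unfolding nn_def order_mod_2_def by auto

lemma nn_min: "m \<ge> 1 \<Longrightarrow> (eps ^ m - 1) / 2 \<in> ring_of_integers d \<Longrightarrow> nn \<le> m"
  unfolding nn_def order_mod_2_def by (rule Least_le) simp

lemma TT_nn: "TT (int nn)" unfolding TT_def using nn_prop(2) by simp

lemma TT_iff: "TT m \<longleftrightarrow> int nn dvd m"
proof
  assume "int nn dvd m"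
  then obtain k where "m = int nn * k" by (rule dvdE)
  thus "TT m" using TT_mult[OF TT_nn] by simp
next
  assume T: "TT m"
  define r where "r = m mod int nn"
  have npos: "int nn > 0" using nn_prop(1) by simp
  have "m = int nn * (m div int nn) + r" unfolding r_def by simp
  hence "r = m + - (int nn * (m div int nn))" by simp
  hence Tr: "TT r" using TT_add[OF T TT_neg[OF TT_mult[OF TT_nn]]] by simp
  have r0: "r \<ge> 0" "r < int nn" unfolding r_def using npos by simp_all
  have "r = 0"
  proof (rule ccontr)
    assume "r \<noteq> 0"
    hence "nat r \<ge> 1" using r0 by simp
    moreover have "(eps ^ nat r - 1) / 2 \<in> ring_of_integers d"
      using Tr r0 unfolding TT_def by (simp add: power_int_def)
    ultimately have "nn \<le> nat r" by (rule nn_min)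
    thus False using r0 by simp
  qed
  thus "int nn dvd m" unfolding r_def by (simp add: dvd_eq_mod_eq_0)
qed

lemma VV_char: "v \<in> VV \<longleftrightarrow> (\<exists>s k. s \<in> {1, -1} \<and> v = s * eps powi (int nn * k))"
proof
  assume v: "v \<in> VV"
  obtain s m where s: "s \<in> {1, -1}" and vm: "v = s * eps powi m" using VV_unit[OF v] by (rule unitE)
  have h: "(1 + v) / 2 \<in> ring_of_integers d" by (rule VV_half[OF v])
  have "TT m"
  proof (cases "s = 1")
    case True
    have e: "(eps powi m - 1) / 2 = (1 + v) / 2 - 1" unfolding vm True by (simp add: field_simps)
    show ?thesis unfolding TT_def e by (rule OK_diff[OF h OK_1])
  next
    case False hence s1: "s = -1" using s by simp
    have e: "(eps powi m - 1) / 2 = - ((1 + v) / 2)" unfolding vm s1 by (simp add: field_simps)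
    show ?thesis unfolding TT_def e by (rule OK_uminus[OF h])
  qed
  then obtain k where "m = int nn * k" unfolding TT_iff by (rule dvdE)
  thus "\<exists>s k. s \<in> {1, -1} \<and> v = s * eps powi (int nn * k)" using s vm by blast
next
  assume "\<exists>s k. s \<in> {1, -1} \<and> v = s * eps powi (int nn * k)"
  then obtain s k where s: "s \<in> {1, -1}" and v: "v = s * eps powi (int nn * k)" by blast
  have u: "v \<in> int_units d" unfolding v by (rule unitI[OF s])
  have T: "(eps powi (int nn * k) - 1) / 2 \<in> ring_of_integers d"
    using TT_mult[OF TT_nn] unfolding TT_def by blast
  have "(1 + v) / 2 \<in> ring_of_integers d"
  proof (cases "s = 1")
    case True
    have e: "(1 + v) / 2 = (eps powi (int nn * k) - 1) / 2 + 1" unfolding v True by (simp add: field_simps)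
    show ?thesis unfolding e by (rule OK_add[OF T OK_1])
  next
    case False hence s1: "s = -1" using s by simp
    have e: "(1 + v) / 2 = - ((eps powi (int nn * k) - 1) / 2)" unfolding v s1 by (simp add: field_simps)
    show ?thesis unfolding e by (rule OK_uminus[OF T])
  qed
  thus "v \<in> VV" using u unfolding VV_def by blast
qed

end


lemma sign_mod: "(i1::int) \<in> {0..<2} \<Longrightarrow> i2 \<in> {0..<2} \<Longrightarrow>
   (-1::real) powi ((i1 + i2) mod 2) = (-1) powi i1 * (-1) powi i2"
proof -
  assume "i1 \<in> {0..<2}" "i2 \<in> {0..<2}"
  hence "i1 = 0 \<or> i1 = 1" "i2 = 0 \<or> i2 = 1" by auto
  thus ?thesis by (elim disjE) simp_all
qed

context qs
begin

lemma main:
  assumes uu: "u = ((1 + eps ^ order_mod_2 d eps) / 2, (1 - eps ^ order_mod_2 d eps) / 2)"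
  shows "group (U1 d) \<and>
         carrier (U1 d) = {gen_g [^]\<^bsub>U1 d\<^esub> (i::int) \<otimes>\<^bsub>U1 d\<^esub> u [^]\<^bsub>U1 d\<^esub> (k::int) | i k. True} \<and>
         (\<lambda>(i, k). gen_g [^]\<^bsub>U1 d\<^esub> (i::int) \<otimes>\<^bsub>U1 d\<^esub> u [^]\<^bsub>U1 d\<^esub> (k::int))
           \<in> iso (DirProd (integer_mod_group 2) integer_group) (U1 d)"
proof -
  interpret G: group "U1 d" by (rule group_U1)
  have uE: "u = EE (eps ^ nn)" unfolding uu nn_def EE_def ..
  have eV: "eps ^ nn \<in> VV" unfolding VV_char
    by (intro exI[of _ 1] exI[of _ 1]) (simp add: power_int_of_nat)
  define F where "F = (\<lambda>(i::int, k::int). gen_g [^]\<^bsub>U1 d\<^esub> i \<otimes>\<^bsub>U1 d\<^esub> u [^]\<^bsub>U1 d\<^esub> k)"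
  have Fd: "F (i, k) = gen_g [^]\<^bsub>U1 d\<^esub> i \<otimes>\<^bsub>U1 d\<^esub> u [^]\<^bsub>U1 d\<^esub> k" for i k
    unfolding F_def by simp
  have Fv: "F (i, k) = EE ((-1) powi i * eps powi (int nn * k))" for i k
    unfolding Fd gen_g_EE uE pow_int_U1[OF VV_m1] pow_int_U1[OF eV] mult_U1 gr_mult_EE
    by (simp add: power_int_power)
  have Fc: "F (i, k) \<in> carrier (U1 d)" for i k
    unfolding Fd gen_g_EE uE by (intro G.m_closed G.int_pow_closed EE_carrier VV_m1 eV)
  have carr: "carrier (U1 d) = F ` ({0..<2} \<times> UNIV)"
  proof
    show "carrier (U1 d) \<subseteq> F ` ({0..<2} \<times> UNIV)"
    proof
      fix x assume "x \<in> carrier (U1 d)"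
      then obtain v where v: "v \<in> VV" and x: "x = EE v" unfolding carrier_U1 by blast
      from v obtain s k where s: "s \<in> {1, -1}" and vs: "v = s * eps powi (int nn * k)"
        unfolding VV_char by blast
      show "x \<in> F ` ({0..<2} \<times> UNIV)"
      proof (cases "s = 1")
        case True
        have "x = F (0, k)" unfolding Fv x vs True by simp
        thus ?thesis by (intro image_eqI[of _ _ "(0, k)"]) simp_all
      next
        case False hence "s = -1" using s by simp
        hence "x = F (1, k)" unfolding Fv x vs by simp
        thus ?thesis by (intro image_eqI[of _ _ "(1, k)"]) simp_all
      qed
    qed
  next
    show "F ` ({0..<2} \<times> UNIV) \<subseteq> carrier (U1 d)" using Fc by auto
  qed
  have c2: "carrier (U1 d) = {F (i, k) | i k. True}"
  proof
    show "carrier (U1 d) \<subseteq> {F (i, k) | i k. True}" unfolding carr by auto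
    show "{F (i, k) | i k. True} \<subseteq> carrier (U1 d)" using Fc by auto
  qed
  have cD: "carrier (DirProd (integer_mod_group 2) integer_group) = {0..<2} \<times> UNIV"
    by (simp add: carrier_integer_mod_group carrier_integer_group)
  have hom: "F \<in> hom (DirProd (integer_mod_group 2) integer_group) (U1 d)"
  proof (rule homI)
    fix x assume "x \<in> carrier (DirProd (integer_mod_group 2) integer_group)"
    show "F x \<in> carrier (U1 d)" using Fc by (cases x) simp
  next
    fix x y assume xy: "x \<in> carrier (DirProd (integer_mod_group 2) integer_group)"
                       "y \<in> carrier (DirProd (integer_mod_group 2) integer_group)"
    obtain i1 k1 where x: "x = (i1, k1)" by force
    obtain i2 k2 where y: "y = (i2, k2)" by force
    have i: "i1 \<in> {0..<2}" "i2 \<in> {0..<2}" using xy unfolding cD x y by auto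
    have m: "x \<otimes>\<^bsub>DirProd (integer_mod_group 2) integer_group\<^esub> y = ((i1 + i2) mod 2, k1 + k2)"
      unfolding x y by simp
    have e: "eps powi (int nn * (k1 + k2)) = eps powi (int nn * k1) * eps powi (int nn * k2)"
      using eps_nz by (simp add: distrib_left power_int_add)
    show "F (x \<otimes>\<^bsub>DirProd (integer_mod_group 2) integer_group\<^esub> y) = F x \<otimes>\<^bsub>U1 d\<^esub> F y"
      unfolding m unfolding x y Fv mult_U1 gr_mult_EE e sign_mod[OF i]
      by (simp add: algebra_simps)
  qed
  have inj: "inj_on F ({0..<2} \<times> UNIV)"
  proof (rule inj_onI)
    fix x y assume xy: "x \<in> {0..<2::int} \<times> (UNIV::int set)" "y \<in> {0..<2::int} \<times> (UNIV::int set)" "F x = F y"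
    obtain i1 k1 where x: "x = (i1, k1)" by force
    obtain i2 k2 where y: "y = (i2, k2)" by force
    have i: "i1 = 0 \<or> i1 = 1" "i2 = 0 \<or> i2 = 1" using xy(1,2) unfolding x y by auto
    have eq: "(-1) powi i1 * eps powi (int nn * k1) = (-1) powi i2 * eps powi (int nn * k2)"
      using xy(3) unfolding x y Fv by (rule EE_inj)
    have p1: "eps powi (int nn * k1) > 0" and p2: "eps powi (int nn * k2) > 0"
      using eps_gt1 by simp_all
    have ii: "i1 = i2" and ee: "eps powi (int nn * k1) = eps powi (int nn * k2)"
      using i eq p1 p2 by (elim disjE; simp)+
    have "int nn * k1 = int nn * k2"
    proof (rule ccontr)
      assume "int nn * k1 \<noteq> int nn * k2"
      hence "int nn * k1 < int nn * k2 \<or> int nn * k2 < int nn * k1" by linarith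
      thus False using power_int_strict_increasing[OF _ eps_gt1] ee by (metis less_irrefl)
    qed
    hence "k1 = k2" using nn_prop(1) by simp
    thus "x = y" unfolding x y using ii by simp
  qed
  have iso: "F \<in> iso (DirProd (integer_mod_group 2) integer_group) (U1 d)"
    unfolding iso_def using hom inj carr cD by (simp add: bij_betw_def)
  show ?thesis using group_U1 c2 iso unfolding Fd F_def by simp
qed

end

theorem mainTheorem5:
  fixes d :: int and eps :: real
  assumes "d > 1" and "squarefree d"
    and "fundamental_unit d eps"
  defines "n \<equiv> order_mod_2 d eps"
  defines "u \<equiv> ((1 + eps ^ n) / 2, (1 - eps ^ n) / 2)"
  shows "group (U1 d) \<and>
         carrier (U1 d) = {gen_g [^]\<^bsub>U1 d\<^esub> (i::int) \<otimes>\<^bsub>U1 d\<^esub> u [^]\<^bsub>U1 d\<^esub> (k::int) | i k. True} \<and>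
         (\<lambda>(i, k). gen_g [^]\<^bsub>U1 d\<^esub> (i::int) \<otimes>\<^bsub>U1 d\<^esub> u [^]\<^bsub>U1 d\<^esub> (k::int))
           \<in> iso (DirProd (integer_mod_group 2) integer_group) (U1 d)"
proof -
  interpret qs d eps using assms(1-3) by unfold_locales
  have "u = ((1 + eps ^ order_mod_2 d eps) / 2, (1 - eps ^ order_mod_2 d eps) / 2)"
    unfolding u_def n_def ..
  thus ?thesis by (rule main)
qed


end
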